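(* Consider the system $x_{k+1}=Ax_k+Bu_k$ with constraint sets $\mathcal{X}=\{x\mid C_xx\le c_x\}$, $\mathcal{U}=\{u\mid C_uu\le c_u\}$ (with $0\in\operatorname{int}\mathcal{X}$, $0\in\operatorname{int}\mathcal{U}$) and equilibrium at the origin, controlled by a ReLU network $u_k=\mathcal{N}(x_k;\theta)$ with $L$ hidden layers, i.e. $x_{k+1}=f_{\text{cl}}(x_k)=Ax_k+B\mathcal{N}(x_k;\theta)$. Let $\Gamma_{\text{eq}}=G(0)$, $\mathcal{R}_{\text{eq}}=\{x\mid G(x)=\Gamma_{\text{eq}}\}$, and suppose $W_{L+1}b_{\Gamma_{\text{eq}},L}+b_{L+1}=0$ and all eigenvalues of $A+BW_{L+1}W_{\Gamma_{\text{eq}},L}$ have modulus strictly less than $1$. Let $\mathcal{R}_K$ be the set of initial states from which the linear feedback $u_k=W_{L+1}W_{\Gamma_{\text{eq}},L}x_k$ yields a trajectory with $x_k\in\mathcal{X}$, $u_k\in\mathcal{U}$ for all $k\ge0$ converging to the origin, and let $\mathcal{R}_{\text{as}}$ be an admissible control-invariant set for the closed loop with $\mathcal{R}_{\text{as}}\subseteq\mathcal{R}_{\text{eq}}\cap\mathcal{R}_K$. Let $\mathcal{X}_{\text{in}}=\{x\mid C_{\text{in}}x\le c_{\text{in}}\}$ be a polytope, $k\ge1$, $C_{\text{out}}\in\mathbb{R}^{n_{\text{out}}\times n_x}$, and define $c_{\text{out}}^{*(i)}=\max_{x_0\in\mathcal{X}_{\text{in}}}C_{\text{out}}^{(i)}f_{\text{cl}}^{k}(x_0)$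 (where $f_{\text{cl}}^k$ is the $k$-fold composition of $f_{\text{cl}}$) and $\mathcal{X}^*_{k,\text{out}}=\{x\mid C_{\text{out}}x\le c_{\text{out}}^*\}$. If $\mathcal{X}^*_{k,\text{out}}\subseteq\mathcal{R}_{\text{as}}$, then the closed-loop system is asymptotically stable for all $x\in\mathcal{X}_{\text{in}}$, i.e. every closed-loop trajectory starting in $\mathcal{X}_{\text{in}}$ converges asymptotically to the origin.
   Context: A ReLU network is $\mathcal{N}(x;\theta)=W_{L+1}\xi_L+b_{L+1}$ with $\xi_0=x$, $\xi_l=\max(0,W_l\xi_{l-1}+b_l)$ elementwise for $l=1,\dots,L$, where $W_l\in\mathbb{R}^{n_l\times n_{l-1}}$ ($n_0=n_x$), $b_l\in\mathbb{R}^{n_l}$, $W_{L+1}\in\mathbb{R}^{n_u\times n_L}$, $b_{L+1}\in\mathbb{R}^{n_u}$. The activation pattern is $G(x)=(\gamma_1(x),\dots,\gamma_L(x))$, $\gamma_l(x)^{(i)}=1$ iff $W_l^{(i)}\xi_{l-1}+b_l^{(i)}\ge0$, else $0$. For a fixed pattern $\Gamma=(\gamma_1,\dots,\gamma_L)$ set $\eta_0=x$, $\eta_l=\gamma_l\odot(W_l\eta_{l-1}+b_l)$; then $\eta_L=W_{\Gamma,L}x+b_{\Gamma,L}$ defines $W_{\Gamma,L}\in\mathbb{R}^{n_L\times n_x}$, $b_{\Gamma,L}\in\mathbb{R}^{n_L}$. A set $\mathcal{C}$ is an admissible control-invariant set for the closed loop if $\mathcal{N}(x;\theta)\in\mathcal{U}$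 for all $x\in\mathcal{C}$ and $f_{\text{cl}}(\mathcal{C})\subseteq\mathcal{C}$. $M^{(i)}$ is the $i$-th row of $M$, $v^{(i)}$ the $i$-th entry of $v$. *)

theory Defs
  imports "Jordan_Normal_Form.Char_Poly"
begin

definition vle :: "real vec \<Rightarrow> real vec \<Rightarrow> bool" where
  "vle x y \<longleftrightarrow> dim_vec x = dim_vec y \<and> (\<forall>i<dim_vec y. x $ i \<le> y $ i)"

definition polyh :: "nat \<Rightarrow> real mat \<Rightarrow> real vec \<Rightarrow> real vec set" where
  "polyh n C c = {x. dim_vec x = n \<and> vle (C *\<^sub>v x) c}"

definition zero_interior :: "nat \<Rightarrow> real vec set \<Rightarrow> bool" where
  "zero_interior n S \<longleftrightarrow> (\<exists>e>0. \<forall>x. dim_vec x = n \<and> (\<forall>i<n. \<bar>x $ i\<bar> < e) \<longrightarrow> x \<in> S)"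

definition bounded_vecs :: "real vec set \<Rightarrow> bool" where
  "bounded_vecs S \<longleftrightarrow> (\<exists>M. \<forall>x\<in>S. \<forall>i<dim_vec x. \<bar>x $ i\<bar> \<le> M)"

definition relu :: "real vec \<Rightarrow> real vec" where
  "relu v = vec (dim_vec v) (\<lambda>i. max 0 (v $ i))"

fun hidden :: "(real mat \<times> real vec) list \<Rightarrow> real vec \<Rightarrow> real vec" where
  "hidden [] x = x"
| "hidden ((W, b) # ls) x = hidden ls (relu (W *\<^sub>v x + b))"

definition net :: "(real mat \<times> real vec) list \<Rightarrow> real mat \<Rightarrow> real vec \<Rightarrow> real vec \<Rightarrow> real vec" where
  "net ls Wo bo x = Wo *\<^sub>v hidden ls x + bo"

fun wf_layers :: "nat \<Rightarrow> (real mat \<times> real vec) list \<Rightarrow> bool" where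
  "wf_layers n [] = True"
| "wf_layers n ((W, b) # ls) = (W \<in> carrier_mat (dim_row W) n \<and> dim_vec b = dim_row W \<and> wf_layers (dim_row W) ls)"

fun out_dim :: "nat \<Rightarrow> (real mat \<times> real vec) list \<Rightarrow> nat" where
  "out_dim n [] = n"
| "out_dim n ((W, b) # ls) = out_dim (dim_row W) ls"

definition wf_net :: "nat \<Rightarrow> nat \<Rightarrow> (real mat \<times> real vec) list \<Rightarrow> real mat \<Rightarrow> real vec \<Rightarrow> bool" where
  "wf_net nx nu ls Wo bo \<longleftrightarrow> wf_layers nx ls \<and> Wo \<in> carrier_mat nu (out_dim nx ls) \<and> dim_vec bo = nu"

fun pattern :: "(real mat \<times> real vec) list \<Rightarrow> real vec \<Rightarrow> real vec list" where
  "pattern [] x = []"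
| "pattern ((W, b) # ls) x =
     (let z = W *\<^sub>v x + b in
      vec (dim_vec z) (\<lambda>i. if z $ i \<ge> 0 then 1 else 0) # pattern ls (relu z))"

(* For a fixed pattern: eta_l = gamma_l .* (W_l eta_{l-1} + b_l), with eta_l = M x + c.
   affine_pat ls gs (M, c) propagates the affine representation (M, c) of eta_{l-1}. *)
fun affine_pat :: "(real mat \<times> real vec) list \<Rightarrow> real vec list \<Rightarrow> real mat \<times> real vec \<Rightarrow> real mat \<times> real vec" where
  "affine_pat ((W, b) # ls) (g # gs) (M, c) =
     (let D = mat (dim_vec g) (dim_vec g) (\<lambda>(i, j). if i = j then g $ i else 0) in
      affine_pat ls gs (D * (W * M), D *\<^sub>v (W *\<^sub>v c + b)))"
| "affine_pat _ _ Mc = Mc"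

definition W_pat :: "nat \<Rightarrow> (real mat \<times> real vec) list \<Rightarrow> real vec list \<Rightarrow> real mat" where
  "W_pat nx ls gs = fst (affine_pat ls gs (1\<^sub>m nx, 0\<^sub>v nx))"

definition b_pat :: "nat \<Rightarrow> (real mat \<times> real vec) list \<Rightarrow> real vec list \<Rightarrow> real vec" where
  "b_pat nx ls gs = snd (affine_pat ls gs (1\<^sub>m nx, 0\<^sub>v nx))"

definition conv_zero :: "nat \<Rightarrow> (nat \<Rightarrow> real vec) \<Rightarrow> bool" where
  "conv_zero n xs \<longleftrightarrow> (\<forall>i<n. (\<lambda>k. xs k $ i) \<longlonglongrightarrow> 0)"

end

theory Submission
  imports Defs
begin

lemma relu_diag:
  fixes z :: "real vec"
  defines "g \<equiv> vec (dim_vec z) (\<lambda>i. if z $ i \<ge> 0 then 1 else 0)"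
  defines "D \<equiv> mat (dim_vec g) (dim_vec g) (\<lambda>(i, j). if i = j then g $ i else 0)"
  shows "relu z = D *\<^sub>v z"
proof (rule eq_vecI)
  fix i assume i: "i < dim_vec (D *\<^sub>v z)"
  hence i': "i < dim_vec z" by (simp add: D_def g_def)
  have "(D *\<^sub>v z) $ i = (\<Sum>j<dim_vec z. (if i = j then g $ i else 0) * z $ j)"
    using i' by (simp add: D_def g_def scalar_prod_def row_def atLeast0LessThan)
  also have "\<dots> = (\<Sum>j<dim_vec z. if i = j then g $ i * z $ j else 0)" by (rule sum.cong) auto
  also have "\<dots> = g $ i * z $ i" using i' by simp
  also have "\<dots> = max 0 (z $ i)" using i' by (simp add: g_def)
  finally show "relu z $ i = (D *\<^sub>v z) $ i" using i' by (simp add: relu_def)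
qed (simp add: relu_def D_def g_def)

lemma hidden_affine:
  "wf_layers n ls \<Longrightarrow> M \<in> carrier_mat n nx \<Longrightarrow> dim_vec c = n \<Longrightarrow> dim_vec x0 = nx \<Longrightarrow>
   hidden ls (M *\<^sub>v x0 + c) =
     fst (affine_pat ls (pattern ls (M *\<^sub>v x0 + c)) (M, c)) *\<^sub>v x0 + snd (affine_pat ls (pattern ls (M *\<^sub>v x0 + c)) (M, c))
   \<and> fst (affine_pat ls (pattern ls (M *\<^sub>v x0 + c)) (M, c)) \<in> carrier_mat (out_dim n ls) nx
   \<and> dim_vec (snd (affine_pat ls (pattern ls (M *\<^sub>v x0 + c)) (M, c))) = out_dim n ls"
proof (induction ls arbitrary: n M c)
  case Nil
  then show ?case by simp
next
  case (Cons Wb ls)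
  obtain W b where Wb: "Wb = (W, b)" by force
  obtain m where m: "m = dim_row W" by simp
  define z where "z = W *\<^sub>v (M *\<^sub>v x0 + c) + b"
  define g where "g = vec (dim_vec z) (\<lambda>i. if z $ i \<ge> 0 then 1 else (0::real))"
  define D where "D = mat (dim_vec g) (dim_vec g) (\<lambda>(i, j). if i = j then g $ i else 0)"
  have W: "W \<in> carrier_mat m n" and b: "dim_vec b = m" and wf: "wf_layers m ls"
    using Cons.prems(1) unfolding Wb wf_layers.simps m by blast+
  have dz: "dim_vec z = m" unfolding z_def using b by simp
  have D: "D \<in> carrier_mat m m" unfolding D_def g_def using dz by simp
  have M: "M \<in> carrier_mat n nx" by fact
  have x0: "x0 \<in> carrier_vec nx" using Cons.prems(4) by (rule carrier_vecI)
  have c: "c \<in> carrier_vec n" using Cons.prems(3) by (rule carrier_vecI)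
  have bc: "b \<in> carrier_vec m" using b by (rule carrier_vecI)
  have rz: "relu z = D *\<^sub>v z" unfolding D_def g_def by (rule relu_diag)
  have Mx: "M *\<^sub>v x0 \<in> carrier_vec n" using M x0 by simp
  have WM: "W * M \<in> carrier_mat m nx" using W M by simp
  have Wc: "W *\<^sub>v c \<in> carrier_vec m" using W c by simp
  have eq: "relu z = (D * (W * M)) *\<^sub>v x0 + D *\<^sub>v (W *\<^sub>v c + b)"
  proof -
    have "W *\<^sub>v (M *\<^sub>v x0 + c) = W *\<^sub>v (M *\<^sub>v x0) + W *\<^sub>v c"
      using mult_add_distrib_mat_vec[OF W Mx c] .
    also have "W *\<^sub>v (M *\<^sub>v x0) = (W * M) *\<^sub>v x0"
      using assoc_mult_mat_vec[OF W M x0] by simp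
    finally have "z = ((W * M) *\<^sub>v x0 + W *\<^sub>v c) + b" unfolding z_def by simp
    also have "\<dots> = (W * M) *\<^sub>v x0 + (W *\<^sub>v c + b)"
      using WM x0 Wc bc by (intro assoc_add_vec) auto
    finally have "D *\<^sub>v z = D *\<^sub>v ((W * M) *\<^sub>v x0) + D *\<^sub>v (W *\<^sub>v c + b)"
      using mult_add_distrib_mat_vec[OF D, of "(W * M) *\<^sub>v x0" "W *\<^sub>v c + b"] WM x0 Wc bc by simp
    also have "D *\<^sub>v ((W * M) *\<^sub>v x0) = (D * (W * M)) *\<^sub>v x0"
      using assoc_mult_mat_vec[OF D WM x0] by simp
    finally show ?thesis using rz by simp
  qed
  have M': "D * (W * M) \<in> carrier_mat m nx" using D WM by simp
  have c': "dim_vec (D *\<^sub>v (W *\<^sub>v c + b)) = m" using D by simp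
  note IH = Cons.IH[OF wf M' c' Cons.prems(4), folded eq]
  have pat: "pattern ((W, b) # ls) (M *\<^sub>v x0 + c) = g # pattern ls (relu z)"
    by (simp add: z_def g_def Let_def)
  have ap: "affine_pat ((W, b) # ls) (g # gs) (M, c) = affine_pat ls gs (D * (W * M), D *\<^sub>v (W *\<^sub>v c + b))" for gs
    by (simp add: D_def Let_def)
  have hd: "hidden ((W, b) # ls) (M *\<^sub>v x0 + c) = hidden ls (relu z)" by (simp add: z_def)
  have od: "out_dim n ((W, b) # ls) = out_dim m ls" by (simp add: m)
  show ?case unfolding Wb pat ap hd od using IH by simp
qed
lemma net_lin:
  assumes wf: "wf_net nx nu ls Wo bo" and dx: "dim_vec x = nx"
    and pat: "pattern ls x = pattern ls (0\<^sub>v nx)"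
    and beq: "Wo *\<^sub>v b_pat nx ls (pattern ls (0\<^sub>v nx)) + bo = 0\<^sub>v nu"
  shows "net ls Wo bo x = (Wo * W_pat nx ls (pattern ls (0\<^sub>v nx))) *\<^sub>v x"
proof -
  have wl: "wf_layers nx ls" and Wo: "Wo \<in> carrier_mat nu (out_dim nx ls)" and bo: "dim_vec bo = nu"
    using wf by (auto simp: wf_net_def)
  have xc: "x \<in> carrier_vec nx" using dx by (rule carrier_vecI)
  have xe: "1\<^sub>m nx *\<^sub>v x + 0\<^sub>v nx = x" using xc by simp
  note H = hidden_affine[OF wl one_carrier_mat index_zero_vec(2) dx, unfolded xe]
  define Wp where "Wp = W_pat nx ls (pattern ls (0\<^sub>v nx))"
  define bp where "bp = b_pat nx ls (pattern ls (0\<^sub>v nx))"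
  have h: "hidden ls x = Wp *\<^sub>v x + bp" and Wp: "Wp \<in> carrier_mat (out_dim nx ls) nx"
    and bp: "dim_vec bp = out_dim nx ls"
    using H pat by (auto simp: Wp_def bp_def W_pat_def b_pat_def)
  have "net ls Wo bo x = Wo *\<^sub>v (Wp *\<^sub>v x) + Wo *\<^sub>v bp + bo"
    unfolding net_def h using mult_add_distrib_mat_vec[OF Wo mult_mat_vec_carrier[OF Wp xc] carrier_vecI[OF bp]]
    by simp
  also have "\<dots> = (Wo * Wp) *\<^sub>v x + (Wo *\<^sub>v bp + bo)"
  proof -
    have c1: "Wo *\<^sub>v (Wp *\<^sub>v x) \<in> carrier_vec nu" using Wo Wp xc by simp
    have c2: "Wo *\<^sub>v bp \<in> carrier_vec nu" using Wo carrier_vecI[OF bp] by simp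
    have c3: "bo \<in> carrier_vec nu" using bo by (rule carrier_vecI)
    show ?thesis using assoc_add_vec[OF c1 c2 c3] assoc_mult_mat_vec[OF Wo Wp xc] by simp
  qed
  also have "\<dots> = (Wo * Wp) *\<^sub>v x" using beq Wo Wp xc by (simp add: bp_def[symmetric])
  finally show ?thesis by (simp add: Wp_def)
qed

theorem theorem1:
  fixes nx nu mx mu nin nout k :: nat
    and A B Cx Cu Cin Cout Wo :: "real mat"
    and cx cu cin cstar bo :: "real vec"
    and ls :: "(real mat \<times> real vec) list"
    and Ras X U Req RK Xin Xout :: "real vec set"
    and N fcl :: "real vec \<Rightarrow> real vec"
    and Geq :: "real vec list" and K :: "real mat"
  assumes X_def: "X = polyh nx Cx cx"
      and U_def: "U =  polyh nu Cu cu"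
      and N_def: "N =  net ls Wo bo"
      and fcl_def: "fcl =  (\<lambda>x. A *\<^sub>v x + B *\<^sub>v N x)"
      and Geq_def: "Geq =  pattern ls (0\<^sub>v nx)"
      and Req_def: "Req =  {x. dim_vec x = nx \<and> pattern ls x = Geq}"
      and K_def: "K =  Wo * W_pat nx ls Geq"
      and RK_def: "RK =  {x0. dim_vec x0 = nx \<and>
                 (\<forall>j. ((A + B * K) ^\<^sub>m j) *\<^sub>v x0 \<in> X \<and> K *\<^sub>v (((A + B * K) ^\<^sub>m j) *\<^sub>v x0) \<in> U) \<and>
                 conv_zero nx (\<lambda>j. ((A + B * K) ^\<^sub>m j) *\<^sub>v x0)}"
      and Xin_def: "Xin =  polyh nx Cin cin"
      and Xout_def: "Xout =  polyh nx Cout cstar"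
      and A_dim: "A \<in> carrier_mat nx nx" and B_dim: "B \<in> carrier_mat nx nu"
      and Cx_dim: "Cx \<in> carrier_mat mx nx" and cx_dim: "dim_vec cx = mx"
      and Cu_dim: "Cu \<in> carrier_mat mu nu" and cu_dim: "dim_vec cu = mu"
      and X_int: "zero_interior nx X" and U_int: "zero_interior nu U"
      and net_wf: "wf_net nx nu ls Wo bo"
      and equil: "fcl (0\<^sub>v nx) = 0\<^sub>v nx"
      and b_eq: "Wo *\<^sub>v b_pat nx ls Geq + bo = 0\<^sub>v nu"
      and stable: "\<And>ev. eigenvalue (map_mat complex_of_real (A + B * K)) ev \<Longrightarrow> cmod ev < 1"
      and Ras_dim: "\<And>x. x \<in> Ras \<Longrightarrow> dim_vec x = nx"
      and Ras_adm: "\<And>x. x \<in> Ras \<Longrightarrow> N x \<in> U"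
      and Ras_inv: "\<And>x. x \<in> Ras \<Longrightarrow> fcl x \<in> Ras"
      and Ras_sub: "Ras \<subseteq> Req \<inter> RK"
      and Cin_dim: "Cin \<in> carrier_mat nin nx" and cin_dim: "dim_vec cin = nin"
      and Xin_bdd: "bounded_vecs Xin"
      and k_pos: "k \<ge> 1"
      and Cout_dim: "Cout \<in> carrier_mat nout nx" and cstar_dim: "dim_vec cstar = nout"
      and cstar_max: "\<And>i. i < nout \<Longrightarrow>
            (\<exists>x0\<in>Xin. row Cout i \<bullet> (fcl ^^ k) x0 = cstar $ i) \<and>
            (\<forall>x0\<in>Xin. row Cout i \<bullet> (fcl ^^ k) x0 \<le> cstar $ i)"
      and out_sub: "Xout \<subseteq> Ras"
  shows "\<forall>x0\<in>Xin. conv_zero nx (\<lambda>j. (fcl ^^ j) x0)"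
  proof
  fix x0 assume x0: "x0 \<in> Xin"
  have Kc: "K \<in> carrier_mat nu nx"
  proof -
    have wl: "wf_layers nx ls" and Wo: "Wo \<in> carrier_mat nu (out_dim nx ls)"
      using net_wf by (auto simp: wf_net_def)
    have "W_pat nx ls Geq \<in> carrier_mat (out_dim nx ls) nx"
      using hidden_affine[OF wl one_carrier_mat index_zero_vec(2) index_zero_vec(2)]
      by (simp add: W_pat_def Geq_def)
    thus ?thesis using Wo K_def by auto
  qed
  have fcl_dim: "dim_vec (fcl x) = nx" for x using B_dim by (simp add: fcl_def)
  have fcl_lin: "fcl x = (A + B * K) *\<^sub>v x" if "x \<in> Ras" for x
  proof -
    have dx: "dim_vec x = nx" using Ras_dim that .
    have "pattern ls x = Geq" using that Ras_sub Req_def by auto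
    hence "N x = K *\<^sub>v x" using net_lin[OF net_wf dx] b_eq unfolding N_def K_def Geq_def by simp
    moreover have "x \<in> carrier_vec nx" using dx by (rule carrier_vecI)
    ultimately show ?thesis using A_dim B_dim Kc
      by (simp add: fcl_def add_mult_distrib_mat_vec[OF A_dim] assoc_mult_mat_vec[OF B_dim Kc])
  qed
  define y where "y = (fcl ^^ k) x0"
  have dy: "dim_vec y = nx" using k_pos fcl_dim unfolding y_def by (cases k) auto
  have "y \<in> Xout" unfolding Xout_def polyh_def vle_def
  proof (intro CollectI conjI allI impI)
    show "dim_vec (Cout *\<^sub>v y) = dim_vec cstar" using Cout_dim cstar_dim by simp
    fix i assume "i < dim_vec cstar"
    hence i: "i < nout" using cstar_dim by simp
    show "(Cout *\<^sub>v y) $ i \<le> cstar $ i" using cstar_max[OF i] x0 i Cout_dim by (simp add: y_def)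
  qed (rule dy)
  hence yR: "y \<in> Ras" using out_sub by auto
  have ABK: "A + B * K \<in> carrier_mat nx nx" using A_dim B_dim Kc by auto
  have trajg: "(fcl ^^ j) z = ((A + B * K) ^\<^sub>m j) *\<^sub>v z" if "z \<in> Ras" for j z
    using that
  proof (induction j arbitrary: z)
    case 0
    have "z \<in> carrier_vec nx" using Ras_dim[OF 0] by (rule carrier_vecI)
    thus ?case using ABK B_dim by simp
  next
    case (Suc j)
    have zc: "z \<in> carrier_vec nx" using Ras_dim[OF Suc.prems] by (rule carrier_vecI)
    have "(fcl ^^ Suc j) z = (fcl ^^ j) (fcl z)" by (simp add: funpow_Suc_right del: funpow.simps)
    also have "\<dots> = ((A + B * K) ^\<^sub>m j) *\<^sub>v ((A + B * K) *\<^sub>v z)"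
      using Suc.IH[OF Ras_inv[OF Suc.prems]] fcl_lin[OF Suc.prems] by simp
    also have "\<dots> = ((A + B * K) ^\<^sub>m j * (A + B * K)) *\<^sub>v z"
      using assoc_mult_mat_vec[OF pow_carrier_mat[OF ABK] ABK zc] by simp
    finally show ?case by simp
  qed
  have traj: "(fcl ^^ j) y = ((A + B * K) ^\<^sub>m j) *\<^sub>v y" for j using trajg[OF yR] .
  have "conv_zero nx (\<lambda>j. ((A + B * K) ^\<^sub>m j) *\<^sub>v y)" using yR Ras_sub RK_def by auto
  hence cz: "conv_zero nx (\<lambda>j. (fcl ^^ j) y)" using traj by simp
  show "conv_zero nx (\<lambda>j. (fcl ^^ j) x0)" unfolding conv_zero_def
  proof (intro allI impI)
    fix i assume "i < nx"
    hence "(\<lambda>j. (fcl ^^ j) y $ i) \<longlonglongrightarrow> 0" using cz conv_zero_def by auto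
    moreover have "(fcl ^^ j) y = (fcl ^^ (j + k)) x0" for j by (simp add: y_def funpow_add)
    ultimately have "(\<lambda>j. (fcl ^^ (j + k)) x0 $ i) \<longlonglongrightarrow> 0" by simp
    thus "(\<lambda>j. (fcl ^^ j) x0 $ i) \<longlonglongrightarrow> 0" by (rule LIMSEQ_offset)
  qed
qed

end
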